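(* Let $N$ be a complex two-step nilpotent Lie algebra whose center has dimension $p=2$, with $q=\dim N-2$, and suppose the marginal rank of $N$ equals $q$. Let $(X,I)$ be a basis of $N$, $\mathcal A=\mathcal A(X,I)$, and let $\mathcal A_{\cdot\cdot i}\in\mathbb C^{q\times q}$ be the slice of $\mathcal A$ obtained by fixing the third index to $i$, $i=1,2$. If \[ \operatorname{rank}(\mathcal A_{\cdot\cdot 1})+\operatorname{rank}(\mathcal A_{\cdot\cdot 2})>q, \] then $\mathcal A$ is not in block diagonal format $(S,T)$ for any nonempty proper subset $S\subset\{1,\dots,q\}$ (and any $T\subseteq\{1,2\}$). Consequently, if this inequality holds for the representation tensor of every basis $(X,I)$ of $N$, then $N$ is indecomposable.
   Context: A basis $(X,I)$ of $N$ consists of $I=\{\mathbf y_1,\dots,\mathbf y_p\}$, a basis of the center of $N$, and $X=\{\mathbf x_1,\dots,\mathbf x_q\}$ such that $X\cup I$ is a basis of $N$. Its representation tensor $\mathcal A(X,I)=(a_{ijk})\in\mathbb C^{q\times q\times p}$ is defined by $a_{ijk}=\alpha_k$ where $[\mathbf x_i,\mathbf x_j]=\sum_{s=1}^p\alpha_s\mathbf y_s$. A tensor is in block diagonal format $(S,T)$ if its only possibly nonzero entries occur at $(i,j,k)\in (S\times S\times T)\cup(S^\complement\times S^\complement\times T^\complement)$. The marginal rank of $N$ is the rank of the $q\times pq$ matrix $[A_1,\dots,A_p]$, where $A_k$ is the $k$-th slice $(a_{ijk})_{i,j}$ of $\mathcal A(X,I)$ (independent of the basis). A Lie algebra is indecomposable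 if it is not a direct sum of two nonzero ideals. *)

theory Defs
  imports Main "Jordan_Normal_Form.DL_Rank"
begin

definition lie_algebra :: "(complex \<Rightarrow> 'v::ab_group_add \<Rightarrow> 'v) \<Rightarrow> ('v \<Rightarrow> 'v \<Rightarrow> 'v) \<Rightarrow> bool" where
  "lie_algebra sc br \<longleftrightarrow>
     vector_space sc \<and>
     (\<forall>x. Vector_Spaces.linear sc sc (br x)) \<and>
     (\<forall>y. Vector_Spaces.linear sc sc (\<lambda>x. br x y)) \<and>
     (\<forall>x. br x x = 0) \<and>
     (\<forall>x y z. br x (br y z) + br y (br z x) + br z (br x y) = 0)"

definition two_step_nilpotent :: "('v::ab_group_add \<Rightarrow> 'v \<Rightarrow> 'v) \<Rightarrow> bool" where
  "two_step_nilpotent br \<longleftrightarrow> (\<forall>x y z. br (br x y) z = 0) \<and> (\<exists>x y. br x y \<noteq> 0)"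

definition lie_center :: "('v::ab_group_add \<Rightarrow> 'v \<Rightarrow> 'v) \<Rightarrow> 'v set" where
  "lie_center br = {z. \<forall>x. br x z = 0}"

definition basis_list_of :: "(complex \<Rightarrow> 'v::ab_group_add \<Rightarrow> 'v) \<Rightarrow> 'v list \<Rightarrow> 'v set \<Rightarrow> bool" where
  "basis_list_of sc vs W \<longleftrightarrow> distinct vs \<and> \<not> module.dependent sc (set vs)
      \<and> module.span sc (set vs) = W"

text \<open>A basis (X,I) of N: ys = I is a basis of the center, xs = X such that X \<union> I is a basis of N.\<close>
definition lie_basis :: "(complex \<Rightarrow> 'v::ab_group_add \<Rightarrow> 'v) \<Rightarrow> ('v \<Rightarrow> 'v \<Rightarrow> 'v) \<Rightarrow> 'v list \<Rightarrow> 'v list \<Rightarrow> bool" where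
  "lie_basis sc br xs ys \<longleftrightarrow> basis_list_of sc ys (lie_center br) \<and> basis_list_of sc (xs @ ys) UNIV"

text \<open>A is the representation tensor A(X,I) (0-based indices):
  [x_i, x_j] = sum_k A i j k * y_k.\<close>
definition rep_tensor :: "(complex \<Rightarrow> 'v::ab_group_add \<Rightarrow> 'v) \<Rightarrow> ('v \<Rightarrow> 'v \<Rightarrow> 'v) \<Rightarrow> 'v list \<Rightarrow> 'v list
    \<Rightarrow> (nat \<Rightarrow> nat \<Rightarrow> nat \<Rightarrow> complex) \<Rightarrow> bool" where
  "rep_tensor sc br xs ys A \<longleftrightarrow>
     (\<forall>i<length xs. \<forall>j<length xs.
        br (xs ! i) (xs ! j) = (\<Sum>k<length ys. sc (A i j k) (ys ! k)))"

definition block_diag_format :: "nat \<Rightarrow> nat \<Rightarrow> (nat \<Rightarrow> nat \<Rightarrow> nat \<Rightarrow> complex) \<Rightarrow> nat set \<Rightarrow> nat set \<Rightarrow> bool" where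
  "block_diag_format q p A S T \<longleftrightarrow>
     (\<forall>i<q. \<forall>j<q. \<forall>k<p. A i j k \<noteq> 0 \<longrightarrow>
        (i \<in> S \<and> j \<in> S \<and> k \<in> T) \<or> (i \<notin> S \<and> j \<notin> S \<and> k \<notin> T))"

definition tensor_slice :: "nat \<Rightarrow> (nat \<Rightarrow> nat \<Rightarrow> nat \<Rightarrow> complex) \<Rightarrow> nat \<Rightarrow> complex mat" where
  "tensor_slice q A k = mat q q (\<lambda>(i, j). A i j k)"

text \<open>The q x pq matrix [A_1, ..., A_p].\<close>
definition marginal_matrix :: "nat \<Rightarrow> nat \<Rightarrow> (nat \<Rightarrow> nat \<Rightarrow> nat \<Rightarrow> complex) \<Rightarrow> complex mat" where
  "marginal_matrix q p A = mat q (p * q) (\<lambda>(i, c). A i (c mod q) (c div q))"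

abbreviation cmat_rank :: "complex mat \<Rightarrow> nat" where
  "cmat_rank M \<equiv> vec_space.rank (dim_row M) (M :: complex mat)"

definition lie_ideal :: "(complex \<Rightarrow> 'v::ab_group_add \<Rightarrow> 'v) \<Rightarrow> ('v \<Rightarrow> 'v \<Rightarrow> 'v) \<Rightarrow> 'v set \<Rightarrow> bool" where
  "lie_ideal sc br J \<longleftrightarrow> module.subspace sc J \<and> (\<forall>x y. y \<in> J \<longrightarrow> br x y \<in> J)"

definition lie_indecomposable :: "(complex \<Rightarrow> 'v::ab_group_add \<Rightarrow> 'v) \<Rightarrow> ('v \<Rightarrow> 'v \<Rightarrow> 'v) \<Rightarrow> bool" where
  "lie_indecomposable sc br \<longleftrightarrow>
     \<not> (\<exists>J K. lie_ideal sc br J \<and> lie_ideal sc br K \<and> J \<noteq> {0} \<and> K \<noteq> {0}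
            \<and> J \<inter> K = {0} \<and> {j + k | j k. j \<in> J \<and> k \<in> K} = UNIV)"

end

theory Submission
  imports Defs
begin


lemma rank_rows_bound:
  fixes M :: "complex mat"
  assumes "finite R" "M \<in> carrier_mat n nc"
    and "\<And>i j. i < n \<Longrightarrow> j < nc \<Longrightarrow> i \<notin> R \<Longrightarrow> M $$ (i,j) = 0"
  shows "vec_space.rank n M \<le> card R"
  using assms
proof (induction R arbitrary: M rule: finite_induct)
  case empty
  then have "M = 0\<^sub>m n nc" by (intro eq_matI) auto
  then show ?case using vec_space.rank_0I by simp
next
  case (insert a R)
  define M1 where "M1 = mat n nc (\<lambda>(r,c). if r = a then M $$ (r,c) else 0)"
  define M2 where "M2 = mat n nc (\<lambda>(r,c). if r = a then 0 else M $$ (r,c))"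
  have c1: "M1 \<in> carrier_mat n nc" and c2: "M2 \<in> carrier_mat n nc" by (auto simp: M1_def M2_def)
  have "M = M1 + M2" using insert.prems(1)[unfolded carrier_mat_def]
    by (intro eq_matI) (auto simp: M1_def M2_def)
  have "vec_space.rank n M2 \<le> card R"
    by (rule insert.IH[OF c2]) (use insert.prems in \<open>auto simp: M2_def\<close>)
  moreover have "vec_space.rank n M1 \<le> 1"
    by (rule vec_space.rank_le_1_product_entries[OF c1, of "\<lambda>r. if r = a then 1 else 0" "\<lambda>c. M $$ (a,c)"])
       (auto simp: M1_def)
  moreover have "vec_space.rank n M \<le> vec_space.rank n M1 + vec_space.rank n M2"
    unfolding \<open>M = M1 + M2\<close> by (rule vec_space.rank_subadditive[OF c1 c2])
  ultimately show ?case using insert.hyps by simp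
qed



lemma slice_bound:
  assumes "finite R" "\<And>i j. i < q \<Longrightarrow> j < q \<Longrightarrow> i \<notin> R \<Longrightarrow> A i j k = 0"
  shows "cmat_rank (tensor_slice q A k) \<le> card R"
proof -
  have "dim_row (tensor_slice q A k) = q" by (simp add: tensor_slice_def)
  then show ?thesis
    using rank_rows_bound[OF assms(1), of "tensor_slice q A k" q q] assms(2)
    by (simp add: tensor_slice_def)
qed

lemma marg_bound:
  assumes "finite R" "\<And>i j k. i < q \<Longrightarrow> j < q \<Longrightarrow> k < 2 \<Longrightarrow> i \<notin> R \<Longrightarrow> A i j k = 0"
  shows "cmat_rank (marginal_matrix q 2 A) \<le> card R"
proof -
  have "dim_row (marginal_matrix q 2 A) = q" by (simp add: marginal_matrix_def)
  moreover have "\<And>i c. i < q \<Longrightarrow> c < 2 * q \<Longrightarrow> i \<notin> R \<Longrightarrow> A i (c mod q) (c div q) = 0"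
  proof -
    fix i c assume "i < q" "c < 2 * q" "i \<notin> R"
    moreover have "c mod q < q" using \<open>i < q\<close> by simp
    moreover have "c div q < 2" using \<open>c < 2*q\<close> by (simp add: less_mult_imp_div_less)
    ultimately show "A i (c mod q) (c div q) = 0" using assms(2) by blast
  qed
  ultimately show ?thesis
    using rank_rows_bound[OF assms(1), of "marginal_matrix q 2 A" q "2*q"]
    by (simp add: marginal_matrix_def)
qed

lemma part1:
  assumes marg: "cmat_rank (marginal_matrix q 2 A) = q"
    and gt: "cmat_rank (tensor_slice q A 0) + cmat_rank (tensor_slice q A 1) > q"
    and S: "S \<noteq> {}" "S \<subset> {0..<q}" and T: "T \<subseteq> {0..<2}"
    and bd: "block_diag_format q 2 A S T"
  shows False
proof -
  have finS: "finite S" using S(2) finite_subset by blast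
  have cS: "card S < q" using psubset_card_mono[OF finite_atLeastLessThan S(2)] by simp
  have sub: "S \<subseteq> {0..<q}" using S(2) by blast
  have cD: "card ({0..<q} - S) = q - card S" using card_Diff_subset[OF finS sub] by simp
  have "card S > 0" using S(1) finS by (simp add: card_gt_0_iff)
  then have cC: "card ({0..<q} - S) < q" using cD cS by simp
  have cSum: "card S + card ({0..<q} - S) = q" using cD cS by simp
  have bd': "\<And>i j k. i < q \<Longrightarrow> j < q \<Longrightarrow> k < 2 \<Longrightarrow> A i j k \<noteq> 0 \<Longrightarrow>
     (i \<in> S \<and> j \<in> S \<and> k \<in> T) \<or> (i \<notin> S \<and> j \<notin> S \<and> k \<notin> T)"
    using bd unfolding block_diag_format_def by blast
  have T01: "\<And>x. x \<in> T \<Longrightarrow> x = 0 \<or> x = 1" using T by auto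
  have "T = {} \<or> T = {0} \<or> T = {1} \<or> T = {0,1}"
  proof (cases "0 \<in> T"; cases "1 \<in> T")
  qed (use T01 in blast)+
  then show False
  proof (elim disjE)
    assume T0: "T = {}"
    have "cmat_rank (marginal_matrix q 2 A) \<le> card ({0..<q} - S)"
    proof (rule marg_bound)
      fix i j k assume "i < q" "j < q" "k < (2::nat)" "i \<notin> {0..<q} - S"
      then show "A i j k = 0" using bd'[of i j k] T0 by auto
    qed simp
    then show False using marg cC by simp
  next
    assume T0: "T = {0,1}"
    have "cmat_rank (marginal_matrix q 2 A) \<le> card S"
    proof (rule marg_bound[OF finS])
      fix i j k assume "i < q" "j < q" "k < (2::nat)" "i \<notin> S"
      then show "A i j k = 0" using bd'[of i j k] T0 by auto
    qed
    then show False using marg cS by simp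
  next
    assume T0: "T = {0}"
    have "cmat_rank (tensor_slice q A 0) \<le> card S"
    proof (rule slice_bound[OF finS])
      fix i j assume "i < q" "j < q" "i \<notin> S"
      then show "A i j 0 = 0" using bd'[of i j 0] T0 by auto
    qed
    moreover have "cmat_rank (tensor_slice q A 1) \<le> card ({0..<q} - S)"
    proof (rule slice_bound)
      fix i j assume "i < q" "j < q" "i \<notin> {0..<q} - S"
      then show "A i j 1 = 0" using bd'[of i j 1] T0 by auto
    qed simp
    ultimately show False using gt cSum by simp
  next
    assume T0: "T = {1}"
    have "cmat_rank (tensor_slice q A 1) \<le> card S"
    proof (rule slice_bound[OF finS])
      fix i j assume "i < q" "j < q" "i \<notin> S"
      then show "A i j 1 = 0" using bd'[of i j 1] T0 by auto
    qed
    moreover have "cmat_rank (tensor_slice q A 0) \<le> card ({0..<q} - S)"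
    proof (rule slice_bound)
      fix i j assume "i < q" "j < q" "i \<notin> {0..<q} - S"
      then show "A i j 0 = 0" using bd'[of i j 0] T0 by auto
    qed simp
    ultimately show False using gt cSum by simp
  qed
qed




lemma lie_props:
  assumes "lie_algebra sc br"
  shows lie_vs: "vector_space sc"
    and br_add_r: "br x (y + z) = br x y + br x z"
    and br_add_l: "br (x + y) z = br x z + br y z"
    and br_scale_r: "br x (sc c y) = sc c (br x y)"
    and br_scale_l: "br (sc c x) y = sc c (br x y)"
    and br_zero_r: "br x 0 = 0"
    and br_zero_l: "br 0 y = 0"
    and br_anti: "br x y = - br y x"
proof -
  have L: "vector_space sc" "\<And>x y z. br x (y + z) = br x y + br x z"
    "\<And>x y z. br (x + y) z = br x z + br y z"
    "\<And>x c y. br x (sc c y) = sc c (br x y)" "\<And>x c y. br (sc c x) y = sc c (br x y)"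
    "\<And>x. br x x = 0"
    using assms unfolding lie_algebra_def Vector_Spaces.linear_iff by auto
  show "vector_space sc" by (fact L(1))
  show "br x (y + z) = br x y + br x z" by (fact L(2))
  show "br (x + y) z = br x z + br y z" by (fact L(3))
  show "br x (sc c y) = sc c (br x y)" by (fact L(4))
  show "br (sc c x) y = sc c (br x y)" by (fact L(5))
  show "br x 0 = 0" using L(2)[of x 0 0] by simp
  show "br 0 y = 0" using L(3)[of 0 0 y] by simp
  have "0 = br (x + y) (x + y)" using L(6) by simp
  also have "\<dots> = br x (x + y) + br y (x + y)" by (rule L(3))
  also have "\<dots> = (br x x + br x y) + (br y x + br y y)" by (simp only: L(2))
  also have "\<dots> = br x y + br y x" using L(6) by simp
  finally show "br x y = - br y x" by (simp add: eq_neg_iff_add_eq_0)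
qed

lemma br_in_center:
  assumes "lie_algebra sc br" "two_step_nilpotent br"
  shows "br x y \<in> lie_center br"
proof -
  have "br w (br x y) = 0" for w
  proof -
    have "br (br x y) w = 0" using assms(2) unfolding two_step_nilpotent_def by blast
    then show ?thesis using br_anti[OF assms(1), of w "br x y"] by simp
  qed
  then show ?thesis unfolding lie_center_def by blast
qed

lemma center_subspace:
  assumes "lie_algebra sc br"
  shows "module.subspace sc (lie_center br)"
proof -
  interpret V: vector_space sc by (rule lie_vs[OF assms])
  show ?thesis unfolding V.subspace_def lie_center_def
    by (simp add: br_add_r[OF assms] br_scale_r[OF assms] br_zero_r[OF assms])
qed

lemma ideal_left:
  assumes "lie_algebra sc br" "lie_ideal sc br J" "y \<in> J"
  shows "br y x \<in> J"
proof -
  interpret V: vector_space sc by (rule lie_vs[OF assms(1)])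
  have "br x y \<in> J" using assms(2,3) unfolding lie_ideal_def by auto
  then have "- br x y \<in> J" using assms(2) V.subspace_neg unfolding lie_ideal_def by blast
  then show ?thesis using br_anti[OF assms(1), of y x] by simp
qed

lemma ideal_center:
  assumes lie: "lie_algebra sc br" and nil: "two_step_nilpotent br"
    and J: "lie_ideal sc br J" and K: "lie_ideal sc br K"
    and JK: "J \<inter> K = {0}" and sum: "\<And>x. \<exists>a b. a \<in> J \<and> b \<in> K \<and> x = a + b"
    and Jn: "J \<noteq> {0}"
  shows "\<exists>z\<in>J. z \<in> lie_center br \<and> z \<noteq> 0"
proof (rule ccontr)
  interpret V: vector_space sc by (rule lie_vs[OF assms(1)])
  assume "\<not> ?thesis"
  then have nz: "\<And>z. z \<in> J \<Longrightarrow> z \<in> lie_center br \<Longrightarrow> z = 0" by blast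
  have "0 \<in> J" using J V.subspace_0 unfolding lie_ideal_def by blast
  then obtain j where j: "j \<in> J" "j \<noteq> 0" using Jn by blast
  have "br x j = 0" for x
  proof -
    obtain a b where ab: "a \<in> J" "b \<in> K" "x = a + b" using sum by blast
    have "br a j = 0" using nz[OF ideal_left[OF lie J ab(1)] br_in_center[OF lie nil]] .
    moreover have "br b j \<in> J" using J j unfolding lie_ideal_def by blast
    moreover have "br b j \<in> K"
    proof -
      have "br j b \<in> K" using K ab(2) unfolding lie_ideal_def by blast
      then have "- br j b \<in> K" using K V.subspace_neg unfolding lie_ideal_def by blast
      then show ?thesis using br_anti[OF lie, of b j] by simp
    qed
    ultimately have "br b j = 0" using JK by blast
    then show ?thesis using \<open>br a j = 0\<close> ab(3) br_add_l[OF lie, of a b j] by simp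
  qed
  then have "j \<in> lie_center br" unfolding lie_center_def by blast
  then show False using nz j by blast
qed


lemma part2:
  fixes sc :: "complex \<Rightarrow> 'v::ab_group_add \<Rightarrow> 'v"
  assumes lie: "lie_algebra sc br" and nil: "two_step_nilpotent br"
    and basis: "lie_basis sc br xs ys" and p2: "length ys = 2" and q: "length xs = q"
    and H: "\<forall>xs' ys' A'. lie_basis sc br xs' ys' \<and> rep_tensor sc br xs' ys' A' \<longrightarrow>
              cmat_rank (tensor_slice q A' 0) + cmat_rank (tensor_slice q A' 1) > q"
  shows "lie_indecomposable sc br"
proof (rule ccontr)
  interpret V: vector_space sc by (rule lie_vs[OF lie])
  assume "\<not> lie_indecomposable sc br"
  then obtain J K where J: "lie_ideal sc br J" and K: "lie_ideal sc br K"
    and Jn: "J \<noteq> {0}" and Kn: "K \<noteq> {0}" and JK: "J \<inter> K = {0}"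
    and sumJK: "{j + k | j k. j \<in> J \<and> k \<in> K} = UNIV"
    unfolding lie_indecomposable_def by blast
  have JS: "V.subspace J" and KS: "V.subspace K" using J K unfolding lie_ideal_def by blast+
  have dec: "\<And>x. \<exists>a b. a \<in> J \<and> b \<in> K \<and> x = a + b" using sumJK by blast
  have dec': "\<And>x. \<exists>a b. a \<in> K \<and> b \<in> J \<and> x = a + b"
    using dec by (metis add.commute)
  have KJ: "K \<inter> J = {0}" using JK by blast
  obtain z1 where z1: "z1 \<in> J" "z1 \<in> lie_center br" "z1 \<noteq> 0"
    using ideal_center[OF lie nil J K JK dec Jn] by blast
  obtain z2 where z2: "z2 \<in> K" "z2 \<in> lie_center br" "z2 \<noteq> 0"
    using ideal_center[OF lie nil K J KJ dec' Kn] by blast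
  have bl: "distinct (xs @ ys)" "V.independent (set (xs @ ys))" "V.span (set (xs @ ys)) = UNIV"
    using basis unfolding lie_basis_def basis_list_of_def by auto
  have blZ: "distinct ys" "V.independent (set ys)" "V.span (set ys) = lie_center br"
    using basis unfolding lie_basis_def basis_list_of_def by auto
  interpret F: finite_dimensional_vector_space sc "set (xs @ ys)"
    by unfold_locales (use bl in auto)
  have ind1: "V.independent {z1}" using z1(3) by (simp add: V.independent_insert)
  have ind2: "V.independent {z2}" using z2(3) by (simp add: V.independent_insert)
  obtain BJ where BJ: "{z1} \<subseteq> BJ" "BJ \<subseteq> J" "V.independent BJ" "J \<subseteq> V.span BJ"
    using V.maximal_independent_subset_extend[of "{z1}" J] ind1 z1(1) by blast
  obtain BK where BK: "{z2} \<subseteq> BK" "BK \<subseteq> K" "V.independent BK" "K \<subseteq> V.span BK"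
    using V.maximal_independent_subset_extend[of "{z2}" K] ind2 z2(1) by blast
  have finJ: "finite BJ" and finK: "finite BK" using BJ(3) BK(3) F.finiteI_independent by auto
  have spJ: "V.span BJ = J" using V.span_subspace[OF BJ(2) BJ(4) JS] .
  have spK: "V.span BK = K" using V.span_subspace[OF BK(2) BK(4) KS] .
  have disj: "BJ \<inter> BK = {}"
  proof (rule ccontr)
    assume "BJ \<inter> BK \<noteq> {}"
    then obtain x where x: "x \<in> BJ" "x \<in> BK" by blast
    then have "x \<in> J \<inter> K" using BJ(2) BK(2) by blast
    then have "x = 0" using JK by blast
    then have "V.dependent BJ" using x(1) V.dependent_zero by blast
    then show False using BJ(3) by blast
  qed
  have indU: "V.independent (BJ \<union> BK)"
    unfolding F.independent_explicit
  proof (intro conjI allI impI ballI)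
    show "finite (BJ \<union> BK)" using finJ finK by simp
    fix c assume c: "(\<Sum>v\<in>BJ \<union> BK. sc (c v) v) = 0"
    define sJ where "sJ = (\<Sum>v\<in>BJ. sc (c v) v)"
    define sK where "sK = (\<Sum>v\<in>BK. sc (c v) v)"
    have "sJ + sK = 0" unfolding sJ_def sK_def sum.union_disjoint[OF finJ finK disj, symmetric] by (rule c)
    then have eq: "sJ = - sK" by (simp add: eq_neg_iff_add_eq_0)
    have "sJ \<in> J" unfolding sJ_def spJ[symmetric]
      by (intro V.span_sum V.span_scale V.span_base)
    moreover have "sK \<in> K" unfolding sK_def spK[symmetric]
      by (intro V.span_sum V.span_scale V.span_base)
    ultimately have "sJ \<in> K" using eq V.subspace_neg[OF KS] by simp
    then have sJ0: "sJ = 0" using \<open>sJ \<in> J\<close> JK by blast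
    then have sK0: "sK = 0" using eq by simp
    fix v assume v: "v \<in> BJ \<union> BK"
    show "c v = 0"
    proof (cases "v \<in> BJ")
      case True
      then show ?thesis using BJ(3) sJ0 unfolding sJ_def F.independent_explicit by blast
    next
      case False
      then have "v \<in> BK" using v by blast
      then show ?thesis using BK(3) sK0 unfolding sK_def F.independent_explicit by blast
    qed
  qed
  have spU: "V.span (BJ \<union> BK) = UNIV"
  proof -
    have "x \<in> V.span (BJ \<union> BK)" for x
    proof -
      obtain a b where ab: "a \<in> J" "b \<in> K" "x = a + b" using dec by blast
      have "a \<in> V.span (BJ \<union> BK)" using ab(1) spJ V.span_mono[of BJ "BJ \<union> BK"] by blast
      moreover have "b \<in> V.span (BJ \<union> BK)" using ab(2) spK V.span_mono[of BK "BJ \<union> BK"] by blast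
      ultimately show ?thesis using ab(3) V.span_add by simp
    qed
    then show ?thesis by blast
  qed
  obtain lJ where lJ: "set lJ = BJ - {z1}" "distinct lJ" using finite_distinct_list[of "BJ - {z1}"] finJ by blast
  obtain lK where lK: "set lK = BK - {z2}" "distinct lK" using finite_distinct_list[of "BK - {z2}"] finK by blast
  define xs' where "xs' = lJ @ lK"
  define ys' where "ys' = [z1, z2]"
  have z1J: "z1 \<in> BJ" and z2K: "z2 \<in> BK" using BJ(1) BK(1) by auto
  have z12: "z1 \<noteq> z2" using z1J z2K disj by blast
  have setU: "set (xs' @ ys') = BJ \<union> BK" unfolding xs'_def ys'_def using lJ(1) lK(1) z1J z2K by auto
  have distU: "distinct (xs' @ ys')" unfolding xs'_def ys'_def
    using lJ lK disj z12 z1J z2K by auto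
  have "V.dim (UNIV :: 'v set) = card (set (xs @ ys))" using V.dim_eq_card[of "set (xs @ ys)" UNIV] bl by simp
  moreover have "V.dim (UNIV :: 'v set) = card (BJ \<union> BK)" using V.dim_eq_card[of "BJ \<union> BK" UNIV] indU spU by simp
  ultimately have "length (xs @ ys) = length (xs' @ ys')"
    using distinct_card[OF bl(1)] distinct_card[OF distU] setU by simp
  then have lenx: "length xs' = q" using p2 q unfolding ys'_def by simp
  have ZS: "V.subspace (lie_center br)" by (rule center_subspace[OF lie])
  have ind12: "V.independent {z1, z2}" by (rule V.independent_mono[OF indU]) (use z1J z2K in simp)
  have spZ: "V.span {z1, z2} = lie_center br"
  proof -
    have sub: "{z1, z2} \<subseteq> lie_center br" using z1 z2 by blast
    have spsp: "V.span (lie_center br) = lie_center br" using ZS V.span_eq_iff by blast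
    have "V.dim (lie_center br) = card (set ys)"
      by (rule V.dim_eq_card; simp only: spsp blZ not_False_eq_True)
    also have "\<dots> = 2" using distinct_card[OF blZ(1)] p2 by simp
    also have "\<dots> = V.dim {z1, z2}" using V.dim_eq_card_independent[OF ind12] z12 by simp
    finally have "V.dim (lie_center br) \<le> V.dim {z1, z2}" by simp
    then have "V.span {z1, z2} = V.span (lie_center br)" using F.dim_eq_span[OF sub] by simp
    then show ?thesis using spsp by simp
  qed
  have lb: "lie_basis sc br xs' ys'"
  proof -
    have "set ys' = {z1, z2}" unfolding ys'_def by simp
    moreover have "distinct ys'" unfolding ys'_def using z12 by simp
    ultimately have "basis_list_of sc ys' (lie_center br)"
      unfolding basis_list_of_def using ind12 spZ by simp
    moreover have "basis_list_of sc (xs' @ ys') UNIV"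
      unfolding basis_list_of_def setU using distU indU spU by simp
    ultimately show ?thesis unfolding lie_basis_def by simp
  qed
  have coeff: "\<exists>p. v = sc (fst p) z1 + sc (snd p) z2" if "v \<in> lie_center br" for v
  proof -
    have "v \<in> V.span (insert z1 {z2})" using that spZ by simp
    then obtain a where "v - sc a z1 \<in> V.span {z2}" using V.span_breakdown_eq by blast
    then obtain b where "v - sc a z1 = sc b z2" using V.span_singleton by blast
    then have "v = sc a z1 + sc b z2" by (simp add: algebra_simps)
    then show ?thesis by (intro exI[of _ "(a, b)"]) simp
  qed
  define co where "co v = (SOME p. v = sc (fst p) z1 + sc (snd p) z2)" for v
  have co: "v = sc (fst (co v)) z1 + sc (snd (co v)) z2" if "v \<in> lie_center br" for v
    unfolding co_def using someI_ex[OF coeff[OF that]] .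
  define A' where "A' i j (k::nat) = (if k = 0 then fst (co (br (xs' ! i) (xs' ! j)))
                                else snd (co (br (xs' ! i) (xs' ! j))))" for i j k
  have rt: "rep_tensor sc br xs' ys' A'"
    unfolding rep_tensor_def
  proof (intro allI impI)
    fix i j assume "i < length xs'" "j < length xs'"
    have s2: "(\<Sum>k<length ys'. sc (A' i j k) (ys' ! k)) = sc (A' i j 0) z1 + sc (A' i j 1) z2"
      unfolding ys'_def by (simp add: numeral_2_eq_2)
    have e: "br (xs' ! i) (xs' ! j) = sc (fst (co (br (xs' ! i) (xs' ! j)))) z1
        + sc (snd (co (br (xs' ! i) (xs' ! j)))) z2" by (rule co[OF br_in_center[OF lie nil]])
    have a0: "A' i j 0 = fst (co (br (xs' ! i) (xs' ! j)))" by (simp add: A'_def)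
    have a1: "A' i j 1 = snd (co (br (xs' ! i) (xs' ! j)))" by (simp add: A'_def)
    show "br (xs' ! i) (xs' ! j) = (\<Sum>k<length ys'. sc (A' i j k) (ys' ! k))"
      unfolding s2 a0 a1 by (rule e)
  qed
  define m where "m = length lJ"
  have mq: "m \<le> q" using lenx unfolding m_def xs'_def by simp
  have inJ: "xs' ! i \<in> J" if "i < m" for i
  proof -
    have "xs' ! i = lJ ! i" using that unfolding xs'_def m_def by (simp add: nth_append)
    moreover have "lJ ! i \<in> set lJ" using that unfolding m_def by simp
    ultimately show ?thesis using lJ(1) BJ(2) by auto
  qed
  have inK: "xs' ! i \<in> K" if "m \<le> i" "i < q" for i
  proof -
    have "xs' ! i = lK ! (i - m)" using that unfolding xs'_def m_def by (simp add: nth_append)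
    moreover have "lK ! (i - m) \<in> set lK" using that lenx unfolding m_def xs'_def by simp
    ultimately show ?thesis using lK(1) BK(2) by auto
  qed
  have fst0: "fst (co v) = 0" if "v \<in> K" "v \<in> lie_center br" for v
  proof -
    have e: "v = sc (fst (co v)) z1 + sc (snd (co v)) z2" by (rule co[OF that(2)])
    have "sc (fst (co v)) z1 = v - sc (snd (co v)) z2" using e by (metis add_diff_cancel_right')
    also have "\<dots> \<in> K" using V.subspace_diff[OF KS that(1) V.subspace_scale[OF KS z2(1)]] .
    finally have "sc (fst (co v)) z1 \<in> K" .
    moreover have "sc (fst (co v)) z1 \<in> J" using V.subspace_scale[OF JS z1(1)] .
    ultimately have "sc (fst (co v)) z1 = 0" using JK by blast
    then show ?thesis using z1(3) by simp
  qed
  have snd0: "snd (co v) = 0" if "v \<in> J" "v \<in> lie_center br" for v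
  proof -
    have e: "v = sc (fst (co v)) z1 + sc (snd (co v)) z2" by (rule co[OF that(2)])
    have "sc (snd (co v)) z2 = v - sc (fst (co v)) z1" using e by (metis add_diff_cancel_left')
    also have "\<dots> \<in> J" using V.subspace_diff[OF JS that(1) V.subspace_scale[OF JS z1(1)]] .
    finally have "sc (snd (co v)) z2 \<in> J" .
    moreover have "sc (snd (co v)) z2 \<in> K" using V.subspace_scale[OF KS z2(1)] .
    ultimately have "sc (snd (co v)) z2 = 0" using JK by blast
    then show ?thesis using z2(3) by simp
  qed
  have r0: "cmat_rank (tensor_slice q A' 0) \<le> card {0..<m}"
  proof (rule slice_bound)
    fix i j assume "i < q" "j < q" "i \<notin> {0..<m}"
    then have "m \<le> i" by simp
    then have "br (xs' ! i) (xs' ! j) \<in> K" using ideal_left[OF lie K inK] \<open>i < q\<close> by blast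
    moreover have "A' i j 0 = fst (co (br (xs' ! i) (xs' ! j)))" by (simp add: A'_def)
    ultimately show "A' i j 0 = 0" using fst0 br_in_center[OF lie nil] by metis
  qed simp
  have r1: "cmat_rank (tensor_slice q A' 1) \<le> card {m..<q}"
  proof (rule slice_bound)
    fix i j assume "i < q" "j < q" "i \<notin> {m..<q}"
    then have "i < m" by simp
    then have "br (xs' ! i) (xs' ! j) \<in> J" using ideal_left[OF lie J inJ] by blast
    moreover have "A' i j 1 = snd (co (br (xs' ! i) (xs' ! j)))" by (simp add: A'_def)
    ultimately show "A' i j 1 = 0" using snd0 br_in_center[OF lie nil] by metis
  qed simp
  have "cmat_rank (tensor_slice q A' 0) + cmat_rank (tensor_slice q A' 1) \<le> q"
    using r0 r1 mq by simp
  moreover have "cmat_rank (tensor_slice q A' 0) + cmat_rank (tensor_slice q A' 1) > q"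
    using H lb rt by blast
  ultimately show False by simp
qed


theorem lemma6:
  fixes sc :: "complex \<Rightarrow> 'v::ab_group_add \<Rightarrow> 'v"
    and br :: "'v \<Rightarrow> 'v \<Rightarrow> 'v"
    and xs ys :: "'v list" and q :: nat
    and A :: "nat \<Rightarrow> nat \<Rightarrow> nat \<Rightarrow> complex"
  assumes lie: "lie_algebra sc br"
    and nil: "two_step_nilpotent br"
    and basis: "lie_basis sc br xs ys"
    and p2: "length ys = 2"
    and q: "length xs = q"
    and tensor: "rep_tensor sc br xs ys A"
    and marg: "cmat_rank (marginal_matrix q 2 A) = q"
  shows "(cmat_rank (tensor_slice q A 0) + cmat_rank (tensor_slice q A 1) > q \<longrightarrow>
           (\<forall>S T. S \<noteq> {} \<and> S \<subset> {0..<q} \<and> T \<subseteq> {0..<2} \<longrightarrow>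
                  \<not> block_diag_format q 2 A S T))
       \<and> ((\<forall>xs' ys' A'. lie_basis sc br xs' ys' \<and> rep_tensor sc br xs' ys' A' \<longrightarrow>
              cmat_rank (tensor_slice q A' 0) + cmat_rank (tensor_slice q A' 1) > q)
           \<longrightarrow> lie_indecomposable sc br)"
proof (intro conjI impI allI)
  fix S T :: "nat set"
  assume "cmat_rank (tensor_slice q A 0) + cmat_rank (tensor_slice q A 1) > q"
    and "S \<noteq> {} \<and> S \<subset> {0..<q} \<and> T \<subseteq> {0..<2}"
  then show "\<not> block_diag_format q 2 A S T"
    using part1[OF marg] by blast
next
  assume "\<forall>xs' ys' A'. lie_basis sc br xs' ys' \<and> rep_tensor sc br xs' ys' A' \<longrightarrow>
              cmat_rank (tensor_slice q A' 0) + cmat_rank (tensor_slice q A' 1) > q"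
  then show "lie_indecomposable sc br"
    by (rule part2[OF lie nil basis p2 q])
qed

end
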